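(* Let $0<\epsilon<1/3$. Suppose $G=(U\cup V,E)$ is a bipartite graph and $H=n\otimes G$ where $n=\max\{|U|,|V|\}$. If $H$ has an $\epsilon$-regular partition of size $t$, then $G$ has a $36\epsilon^{1/18}$-regular partition of size at most $2t+2$.
   Context: For a bipartite graph $G=(U\cup V,E)$ and $n\ge1$, $n\otimes G$ is the $3$-graph with vertex set $U\cup V\cup\{c_1,\dots,c_n\}$ ($c_i$ new vertices) and edge set $\{\{c_i,u,w\}: i\in[n], uw\in E\}$. Graph regularity: $d_G(X,Y)=|\{(x,y)\in X\times Y:xy\in E\}|/(|X||Y|)$; $(X,Y)$ is $\eta$-regular if $|d_G(X,Y)-d_G(X',Y')|\le\eta$ for all $X'\subseteq X,Y'\subseteq Y$ with $|X'|\ge\eta|X|,|Y'|\ge\eta|Y|$; a partition $\mathcal P$ of $V(G)$ (not necessarily equitable; pairs $(X,X)$ allowed) is $\eta$-regular if at least $(1-\eta)|V(G)|^2$ pairs of $V(G)^2$ lie in $X\times Y$ for some $\eta$-regular $(X,Y)\in\mathcal P^2$. $3$-graph regularity: $d_H(X,Y,Z)=|\{(x,y,z)\in X\times Y\times Z:\{x,y,z\}\in E(H)\}|/(|X||Y||Z|)$; $(X,Y,Z)$ is $\epsilon$-regular if $|d_H(X,Y,Z)-d_H(X',Y',Z')|\le\epsilon$ for all subsets of sizes at least $\epsilon|X|,\epsilon|Y|,\epsilon|Z|$; a partition $\mathcal P$ of $V(H)$ is $\epsilon$-regular if at least $(1-\epsilon)|V(H)|^3$ triples of $V(H)^3$ lie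 in $X\times Y\times Z$ for some $\epsilon$-regular $(X,Y,Z)\in\mathcal P^3$. *)

theory Defs
  imports Complex_Main
begin

definition is_partition :: "'v set set \<Rightarrow> 'v set \<Rightarrow> bool" where
  "is_partition P S \<longleftrightarrow> (\<forall>X\<in>P. X \<noteq> {}) \<and> (\<forall>X\<in>P. \<forall>Y\<in>P. X \<noteq> Y \<longrightarrow> X \<inter> Y = {}) \<and> \<Union>P = S"

definition gdens :: "'v set set \<Rightarrow> 'v set \<Rightarrow> 'v set \<Rightarrow> real" where
  "gdens E X Y = real (card {(x,y) \<in> X \<times> Y. {x,y} \<in> E}) / (real (card X) * real (card Y))"

definition g_regular_pair :: "'v set set \<Rightarrow> real \<Rightarrow> 'v set \<Rightarrow> 'v set \<Rightarrow> bool" where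
  "g_regular_pair E \<eta> X Y \<longleftrightarrow>
     (\<forall>X' Y'. X' \<subseteq> X \<and> Y' \<subseteq> Y \<and> real (card X') \<ge> \<eta> * real (card X) \<and> real (card Y') \<ge> \<eta> * real (card Y)
        \<longrightarrow> \<bar>gdens E X Y - gdens E X' Y'\<bar> \<le> \<eta>)"

definition g_regular_partition :: "'v set set \<Rightarrow> 'v set \<Rightarrow> real \<Rightarrow> 'v set set \<Rightarrow> bool" where
  "g_regular_partition E S \<eta> P \<longleftrightarrow>
     real (card {(x,y) \<in> S \<times> S. \<exists>X\<in>P. \<exists>Y\<in>P. g_regular_pair E \<eta> X Y \<and> x \<in> X \<and> y \<in> Y})
       \<ge> (1 - \<eta>) * real (card S) ^ 2"

definition hdens :: "'v set set \<Rightarrow> 'v set \<Rightarrow> 'v set \<Rightarrow> 'v set \<Rightarrow> real" where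
  "hdens F X Y Z = real (card {(x,y,z) \<in> X \<times> Y \<times> Z. {x,y,z} \<in> F}) /
      (real (card X) * real (card Y) * real (card Z))"

definition h_regular_triple :: "'v set set \<Rightarrow> real \<Rightarrow> 'v set \<Rightarrow> 'v set \<Rightarrow> 'v set \<Rightarrow> bool" where
  "h_regular_triple F \<epsilon> X Y Z \<longleftrightarrow>
     (\<forall>X' Y' Z'. X' \<subseteq> X \<and> Y' \<subseteq> Y \<and> Z' \<subseteq> Z \<and> real (card X') \<ge> \<epsilon> * real (card X)
        \<and> real (card Y') \<ge> \<epsilon> * real (card Y) \<and> real (card Z') \<ge> \<epsilon> * real (card Z)
        \<longrightarrow> \<bar>hdens F X Y Z - hdens F X' Y' Z'\<bar> \<le> \<epsilon>)"

definition h_regular_partition :: "'v set set \<Rightarrow> 'v set \<Rightarrow> real \<Rightarrow> 'v set set \<Rightarrow> bool" where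
  "h_regular_partition F S \<epsilon> P \<longleftrightarrow>
     real (card {(x,y,z) \<in> S \<times> S \<times> S. \<exists>X\<in>P. \<exists>Y\<in>P. \<exists>Z\<in>P.
         h_regular_triple F \<epsilon> X Y Z \<and> x \<in> X \<and> y \<in> Y \<and> z \<in> Z})
       \<ge> (1 - \<epsilon>) * real (card S) ^ 3"

definition bipartite :: "'a set \<Rightarrow> 'a set \<Rightarrow> 'a set set \<Rightarrow> bool" where
  "bipartite U V E \<longleftrightarrow> finite U \<and> finite V \<and> U \<inter> V = {} \<and> E \<subseteq> {{u,w} | u w. u \<in> U \<and> w \<in> V}"

text \<open>The 3-graph n \<otimes> G: original vertices Inl v, new vertices c_i = Inr i, i in {1..n}.\<close>
definition tensor_verts :: "nat \<Rightarrow> 'a set \<Rightarrow> 'a set \<Rightarrow> ('a + nat) set" where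
  "tensor_verts n U V = Inl ` (U \<union> V) \<union> Inr ` {1..n}"

definition tensor_edges :: "nat \<Rightarrow> 'a set set \<Rightarrow> ('a + nat) set set" where
  "tensor_edges n E = {{Inr i, Inl u, Inl w} | i u w. i \<in> {1..n} \<and> {u,w} \<in> E}"

end

theory Submission
  imports Defs
begin


lemma gdens_swap: "gdens E X Y = gdens E Y X"
proof -
  have "{(x,y) \<in> Y \<times> X. {x,y} \<in> E} = prod.swap ` {(x,y) \<in> X \<times> Y. {x,y} \<in> E}"
    by (auto simp: insert_commute image_iff)
  then have "card {(x,y) \<in> Y \<times> X. {x,y} \<in> E} = card {(x,y) \<in> X \<times> Y. {x,y} \<in> E}"
    by (simp add: card_image)
  then show ?thesis unfolding gdens_def by (simp add: mult.commute)
qed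

lemma greg_swap: "g_regular_pair E \<eta> X Y \<Longrightarrow> g_regular_pair E \<eta> Y X"
  unfolding g_regular_pair_def by (metis gdens_swap)

lemma gdens_same_side:
  assumes "bipartite U V E" "X \<subseteq> W" "Y \<subseteq> W" "W = U \<or> W = V"
  shows "gdens E X Y = 0"
proof -
  have "{(x,y) \<in> X \<times> Y. {x,y} \<in> E} = {}"
  proof (rule ccontr)
    assume "{(x,y) \<in> X \<times> Y. {x,y} \<in> E} \<noteq> {}"
    then obtain x y where xy: "x \<in> X" "y \<in> Y" "{x,y} \<in> E" by auto
    then obtain u w where "{x,y} = {u,w}" "u \<in> U" "w \<in> V"
      using assms(1) unfolding bipartite_def by blast
    moreover have "U \<inter> V = {}" using assms(1) unfolding bipartite_def by blast
    ultimately show False using xy assms(2-4) by (auto simp: doubleton_eq_iff)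
  qed
  then show ?thesis unfolding gdens_def by (metis card.empty of_nat_0 div_0)
qed

lemma greg_same_side:
  assumes "bipartite U V E" "X \<subseteq> W" "Y \<subseteq> W" "W = U \<or> W = V" "0 \<le> \<eta>"
  shows "g_regular_pair E \<eta> X Y"
  unfolding g_regular_pair_def
proof (intro allI impI)
  fix X' Y' assume h: "X' \<subseteq> X \<and> Y' \<subseteq> Y \<and> \<eta> * real (card X) \<le> real (card X') \<and> \<eta> * real (card Y) \<le> real (card Y')"
  have "gdens E X Y = 0" using gdens_same_side[OF assms(1-4)] .
  moreover have "gdens E X' Y' = 0" using gdens_same_side[OF assms(1) _ _ assms(4), of X' Y'] h assms(2,3) by blast
  ultimately show "\<bar>gdens E X Y - gdens E X' Y'\<bar> \<le> \<eta>" using assms(5) by simp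
qed

lemma edge_iff:
  assumes "i \<in> {1..n}"
  shows "({Inl a, Inl b, Inr i} \<in> tensor_edges n E) \<longleftrightarrow> {a,b} \<in> E"
proof
  assume "{Inl a, Inl b, Inr i} \<in> tensor_edges n E"
  then obtain j u w where h: "{Inl a, Inl b, Inr i} = {Inr j, Inl u, Inl w}" "{u,w} \<in> E"
    unfolding tensor_edges_def by blast
  have "{a,b} = {x. Inl x \<in> {Inl a, Inl b, Inr i}}" by auto
  also have "\<dots> = {x. Inl x \<in> {Inr j, Inl u, Inl w}}" using h(1) by simp
  also have "\<dots> = {u,w}" by auto
  finally show "{a,b} \<in> E" using h(2) by simp
next
  assume "{a,b} \<in> E"
  moreover have "{Inl a, Inl b, Inr i} = {Inr i, Inl a, Inl b}" by auto
  ultimately show "{Inl a, Inl b, Inr i} \<in> tensor_edges n E"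
    unfolding tensor_edges_def using assms by blast
qed

lemma hdens_eq:
  assumes "Zc \<subseteq> Inr ` {1..n}" "Zc \<noteq> {}" "finite Zc" "finite A" "finite B"
  shows "hdens (tensor_edges n E) (Inl ` A) (Inl ` B) Zc = gdens E A B"
proof -
  define e where "e = {(x,y) \<in> A \<times> B. {x,y} \<in> E}"
  have "{(x,y,z) \<in> Inl ` A \<times> Inl ` B \<times> Zc. {x,y,z} \<in> tensor_edges n E}
      = (\<lambda>((a,b),z). (Inl a, Inl b, z)) ` (e \<times> Zc)" (is "?L = ?f ` _")
  proof (rule set_eqI, rule iffI)
    fix p assume "p \<in> ?L"
    then obtain a b z where p: "p = (Inl a, Inl b, z)" "a \<in> A" "b \<in> B" "z \<in> Zc"
       "{Inl a, Inl b, z} \<in> tensor_edges n E" by auto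
    then obtain i where i: "z = Inr i" "i \<in> {1..n}" using assms(1) by auto
    then have "{a,b} \<in> E" using p(5) edge_iff by metis
    then show "p \<in> ?f ` (e \<times> Zc)"
      using p unfolding e_def by (auto simp: image_iff)
  next
    fix p assume "p \<in> ?f ` (e \<times> Zc)"
    then obtain a b z where p: "p = (Inl a, Inl b, z)" "a \<in> A" "b \<in> B" "z \<in> Zc"
       "{a, b} \<in> E" unfolding e_def by auto
    then obtain i where i: "z = Inr i" "i \<in> {1..n}" using assms(1) by auto
    then have "{Inl a, Inl b, z} \<in> tensor_edges n E" using p(5) edge_iff by metis
    then show "p \<in> ?L"
      using p by auto
  qed
  moreover have "inj_on ?f (e \<times> Zc)"
    by (auto simp: inj_on_def)
  ultimately have c: "card ?L = card e * card Zc"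
    by (simp only: card_image card_cartesian_product)
  have "card Zc > 0" using assms(2,3) by auto
  then show ?thesis unfolding hdens_def gdens_def c e_def
    by (simp add: card_image)
qed



lemma key:
  fixes \<epsilon> \<eta> \<gamma> :: real
  assumes "0 < \<epsilon>" "2*\<epsilon> \<le> \<eta>" "\<epsilon> \<le> \<gamma>" "\<epsilon> \<le> \<eta>*\<gamma>"
    and "Inl ` A \<subseteq> X" "Inl ` B \<subseteq> Y" "finite A" "finite B" "Zc \<subseteq> Z" "Zc \<subseteq> Inr`{1..n}"
    "finite Zc" "Zc \<noteq> {}" "\<epsilon>*card Z \<le> card Zc"
    and "\<gamma>*card X \<le> card A" "\<gamma>*card Y \<le> card B"
    and "\<not> g_regular_pair E \<eta> A B"
  shows "\<not> h_regular_triple (tensor_edges n E) \<epsilon> X Y Z"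
proof
  assume hr: "h_regular_triple (tensor_edges n E) \<epsilon> X Y Z"
  from assms(16) obtain A' B' where AB: "A' \<subseteq> A" "B' \<subseteq> B" "\<eta> * card A \<le> card A'"
    "\<eta> * card B \<le> card B'" "\<bar>gdens E A B - gdens E A' B'\<bar> > \<eta>"
    unfolding g_regular_pair_def not_all not_imp not_le by blast
  have fin: "finite A'" "finite B'" using AB assms(7,8) finite_subset by auto
  have ci: "card (Inl ` S) = card S" for S :: "'a set" by (simp add: card_image)
  have ge0: "0 \<le> \<eta>" "0 \<le> \<gamma>" using assms(1-4) by linarith+
  have sX: "\<epsilon> * card X \<le> card A" using assms(3,14) mult_right_mono[OF assms(3), of "card X"] by linarith
  have sY: "\<epsilon> * card Y \<le> card B" using assms(3,15) mult_right_mono[OF assms(3), of "card Y"] by linarith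
  have sX': "\<epsilon> * card X \<le> card A'"
  proof -
    have "\<epsilon> * card X \<le> \<eta> * \<gamma> * card X" using assms(4) by (simp add: mult_right_mono)
    also have "\<dots> \<le> \<eta> * card A" using assms(14) ge0 by (simp add: mult.assoc mult_left_mono)
    finally show ?thesis using AB(3) by linarith
  qed
  have sY': "\<epsilon> * card Y \<le> card B'"
  proof -
    have "\<epsilon> * card Y \<le> \<eta> * \<gamma> * card Y" using assms(4) by (simp add: mult_right_mono)
    also have "\<dots> \<le> \<eta> * card B" using assms(15) ge0 by (simp add: mult.assoc mult_left_mono)
    finally show ?thesis using AB(4) by linarith
  qed
  have "\<bar>hdens (tensor_edges n E) X Y Z - hdens (tensor_edges n E) (Inl ` A) (Inl ` B) Zc\<bar> \<le> \<epsilon>"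
    using hr[unfolded h_regular_triple_def, rule_format, of "Inl ` A" "Inl ` B" Zc] assms(5,6,9,13) sX sY by (simp add: ci)
  then have 1: "\<bar>hdens (tensor_edges n E) X Y Z - gdens E A B\<bar> \<le> \<epsilon>"
    using hdens_eq[OF assms(10,12,11,7,8)] by simp
  have i1: "Inl ` A' \<subseteq> X" using AB(1) assms(5) by blast
  have i2: "Inl ` B' \<subseteq> Y" using AB(2) assms(6) by blast
  have "\<bar>hdens (tensor_edges n E) X Y Z - hdens (tensor_edges n E) (Inl ` A') (Inl ` B') Zc\<bar> \<le> \<epsilon>"
    using hr[unfolded h_regular_triple_def, rule_format, of "Inl ` A'" "Inl ` B'" Zc] i1 i2 assms(9,13) sX' sY' by (simp add: ci)
  then have 2: "\<bar>hdens (tensor_edges n E) X Y Z - gdens E A' B'\<bar> \<le> \<epsilon>"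
    using hdens_eq[OF assms(10,12,11) fin] by simp
  show False using 1 2 AB(5) assms(2) by linarith
qed


lemma card_UN_triples:
  assumes "finite Q" "\<forall>X\<in>Q. finite X" "\<forall>X\<in>Q. \<forall>Y\<in>Q. X \<noteq> Y \<longrightarrow> X \<inter> Y = {}"
  shows "real (card (\<Union>T\<in>{T \<in> Q \<times> Q \<times> Q. R T}. (case T of (X,Y,Z) \<Rightarrow> X \<times> Y \<times> Z)))
    = (\<Sum>X\<in>Q. \<Sum>Y\<in>Q. \<Sum>Z\<in>Q. if R (X,Y,Z) then real (card X) * real (card Y) * real (card Z) else 0)"
proof -
  let ?I = "{T \<in> Q \<times> Q \<times> Q. R T}"
  let ?f = "\<lambda>T. (case T of (X,Y,Z) \<Rightarrow> X \<times> Y \<times> Z)"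
  have "card (\<Union>(?f ` ?I)) = (\<Sum>T\<in>?I. card (?f T))"
  proof (rule card_UN_disjoint)
    show "finite ?I" using assms(1) by simp
    show "\<forall>T\<in>?I. finite (?f T)" using assms(2) by auto
    show "\<forall>i\<in>?I. \<forall>j\<in>?I. i \<noteq> j \<longrightarrow> ?f i \<inter> ?f j = {}"
    proof (intro ballI impI)
      fix i j assume ij: "i \<in> ?I" "j \<in> ?I" "i \<noteq> j"
      obtain X Y Z X' Y' Z' where e: "i = (X,Y,Z)" "j = (X',Y',Z')" by (cases i, cases j) auto
      have "X \<inter> X' = {} \<or> Y \<inter> Y' = {} \<or> Z \<inter> Z' = {}" using assms(3) ij e by auto
      then show "?f i \<inter> ?f j = {}" using e by auto
    qed
  qed
  then have "real (card (\<Union>(?f ` ?I))) = (\<Sum>T\<in>?I. real (card (?f T)))" by simp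
  also have "\<dots> = (\<Sum>T\<in>Q \<times> Q \<times> Q. if R T then real (card (?f T)) else 0)"
    using assms(1) by (simp add: sum.inter_filter)
  also have "\<dots> = (\<Sum>X\<in>Q. \<Sum>Y\<in>Q. \<Sum>Z\<in>Q. if R (X,Y,Z) then real (card X) * real (card Y) * real (card Z) else 0)"
    unfolding sum.cartesian_product' by (intro sum.cong refl) (simp add: card_cartesian_product)
  finally show ?thesis .
qed

lemma card_UN_pairs:
  assumes "finite Q"
  shows "real (card (\<Union>T\<in>{T \<in> Q \<times> Q. R T}. (case T of (X,Y) \<Rightarrow> f X \<times> g Y)))
    \<le> (\<Sum>X\<in>Q. \<Sum>Y\<in>Q. if R (X,Y) then real (card (f X)) * real (card (g Y)) else 0)"
proof -
  let ?I = "{T \<in> Q \<times> Q. R T}"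
  let ?h = "\<lambda>T. (case T of (X,Y) \<Rightarrow> f X \<times> g Y)"
  have "card (\<Union>(?h ` ?I)) \<le> (\<Sum>T\<in>?I. card (?h T))"
    by (rule card_UN_le) (use assms in simp)
  then have "real (card (\<Union>(?h ` ?I))) \<le> real (\<Sum>T\<in>?I. card (?h T))"
    by (simp only: of_nat_le_iff)
  also have "\<dots> = (\<Sum>T\<in>?I. real (card (?h T)))" by simp
  also have "\<dots> = (\<Sum>T\<in>Q \<times> Q. if R T then real (card (?h T)) else 0)"
    using assms(1) by (simp add: sum.inter_filter)
  also have "\<dots> = (\<Sum>X\<in>Q. \<Sum>Y\<in>Q. if R (X,Y) then real (card (f X)) * real (card (g Y)) else 0)"
    unfolding sum.cartesian_product' by (intro sum.cong refl) (simp add: card_cartesian_product)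
  finally show ?thesis .
qed



theorem lemma5p3:
  fixes U V :: "'a set" and E :: "'a set set" and \<epsilon> :: real and t :: nat
    and Q :: "('a + nat) set set"
  assumes "0 < \<epsilon>" and "\<epsilon> < 1/3"
    and "bipartite U V E"
    and "U \<union> V \<noteq> {}"
    and "is_partition Q (tensor_verts (max (card U) (card V)) U V)"
    and "card Q = t"
    and "h_regular_partition (tensor_edges (max (card U) (card V)) E)
           (tensor_verts (max (card U) (card V)) U V) \<epsilon> Q"
  shows "\<exists>P. is_partition P (U \<union> V) \<and> card P \<le> 2 * t + 2 \<and>
           g_regular_partition E (U \<union> V) (36 * \<epsilon> powr (1/18)) P"
proof -
  define n where "n = max (card U) (card V)"
  define S where "S = tensor_verts n U V"
  define F where "F = tensor_edges n E"
  define C :: "('a+nat) set" where "C = Inr ` {1..n}"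
  define \<delta> where "\<delta> = \<epsilon> powr (1/18)"
  define \<eta> where "\<eta> = 36 * \<delta>"
  define XU where "XU = (\<lambda>X::('a+nat) set. {u\<in>U. Inl u \<in> X})"
  define XV where "XV = (\<lambda>X::('a+nat) set. {u\<in>V. Inl u \<in> X})"
  define P where "P = (XU ` Q \<union> XV ` Q) - {{}}"
  have bip: "finite U" "finite V" "U \<inter> V = {}" using assms(3) unfolding bipartite_def by auto
  have QS: "is_partition Q S" using assms(5) unfolding S_def n_def .
  have Qne: "\<And>X. X\<in>Q \<Longrightarrow> X \<noteq> {}" and Qdisj: "\<And>X Y. X\<in>Q \<Longrightarrow> Y\<in>Q \<Longrightarrow> X\<noteq>Y \<Longrightarrow> X\<inter>Y={}"
    and QU: "\<Union>Q = S" using QS unfolding is_partition_def by auto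
  have finS: "finite S" unfolding S_def tensor_verts_def using bip by simp
  have XS: "\<And>X. X\<in>Q \<Longrightarrow> X \<subseteq> S" using QU by blast
  have finQ: "finite Q" using finS XS by (meson Pow_iff finite_Pow_iff finite_subset subsetI)
  have finX: "\<And>X. X\<in>Q \<Longrightarrow> finite X" using finS XS finite_subset by blast
  have uniq: "\<And>X Y v. X\<in>Q \<Longrightarrow> Y\<in>Q \<Longrightarrow> v\<in>X \<Longrightarrow> v\<in>Y \<Longrightarrow> X = Y" using Qdisj by blast
  have inS: "\<And>v. v\<in>S \<Longrightarrow> \<exists>X\<in>Q. v\<in>X" using QU by blast
  have InlS: "\<And>x. x \<in> U \<union> V \<Longrightarrow> Inl x \<in> S" unfolding S_def tensor_verts_def by simp
  have XUP: "\<And>X x. X \<in> Q \<Longrightarrow> x \<in> XU X \<Longrightarrow> XU X \<in> P" unfolding P_def by blast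
  have XVP: "\<And>X x. X \<in> Q \<Longrightarrow> x \<in> XV X \<Longrightarrow> XV X \<in> P" unfolding P_def by blast
  have partP: "is_partition P (U \<union> V)"
    unfolding is_partition_def
  proof (intro conjI ballI impI)
    fix A assume "A\<in>P" thus "A\<noteq>{}" unfolding P_def by blast
  next
    fix A B assume AB: "A\<in>P" "B\<in>P" "A\<noteq>B"
    show "A\<inter>B={}"
    proof -
      obtain X where X: "X \<in> Q" "A = XU X \<or> A = XV X" using AB(1) unfolding P_def by blast
      obtain Y where Y: "Y \<in> Q" "B = XU Y \<or> B = XV Y" using AB(2) unfolding P_def by blast
      show ?thesis
      proof (cases "X = Y")
        case True
        then show ?thesis using X Y AB(3) bip(3) unfolding XU_def XV_def by auto
      next
        case False
        then have "X \<inter> Y = {}" using Qdisj X Y by blast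
        then show ?thesis using X Y unfolding XU_def XV_def by auto
      qed
    qed
  next
    show "\<Union>P = U \<union> V"
    proof
      show "\<Union>P \<subseteq> U \<union> V" unfolding P_def XU_def XV_def by auto
      show "U \<union> V \<subseteq> \<Union>P"
      proof
        fix x assume x: "x \<in> U \<union> V"
        then obtain X where X: "X \<in> Q" "Inl x \<in> X" using inS InlS by blast
        show "x \<in> \<Union>P"
        proof (cases "x \<in> U")
          case True
          then have "x \<in> XU X" using X unfolding XU_def by simp
          then show ?thesis using XUP X by blast
        next
          case False
          then have "x \<in> XV X" using X x unfolding XV_def by simp
          then show ?thesis using XVP X by blast
        qed
      qed
    qed
  qed
  have cardP: "card P \<le> 2*t+2"
  proof -
    have "card P \<le> card (XU ` Q \<union> XV ` Q)" unfolding P_def using finQ by (intro card_mono) auto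
    also have "\<dots> \<le> card (XU ` Q) + card (XV ` Q)" by (rule card_Un_le)
    also have "\<dots> \<le> card Q + card Q" by (intro add_mono card_image_le finQ)
    finally show ?thesis using assms(6) by simp
  qed
  have reg: "g_regular_partition E (U \<union> V) \<eta> P"
  proof -
    define m where "m = card (U \<union> V)"
    define covG where "covG = {(x,y) \<in> (U \<union> V) \<times> (U \<union> V). \<exists>X\<in>P. \<exists>Y\<in>P. g_regular_pair E \<eta> X Y \<and> x \<in> X \<and> y \<in> Y}"
    have goal: "(1 - \<eta>) * real m ^ 2 \<le> real (card covG)"
    proof (cases "1 \<le> \<eta>")
      case True
      then have "(1 - \<eta>) * real m ^ 2 \<le> 0" by (simp add: mult_nonpos_nonneg)
      then show ?thesis by linarith
    next
      case False
      have dpos: "0 < \<delta>" unfolding \<delta>_def using assms(1) by simp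
      have d18: "\<delta> ^ 18 = \<epsilon>" unfolding \<delta>_def using assms(1) by (simp add: powr_power)
      have dsmall: "\<delta> < 1/36" using False unfolding \<eta>_def by simp
      have "\<delta> ^ 18 \<le> \<delta> ^ 2" by (rule power_decreasing) (use dpos dsmall in auto)
      then have ed2: "\<epsilon> \<le> \<delta> * \<delta>" using d18 by (simp add: power2_eq_square)
      have "\<delta> * \<delta> \<le> \<delta> * (1/36)" using dpos dsmall by (intro mult_left_mono) auto
      then have ed: "\<epsilon> \<le> \<delta> / 36" using ed2 by simp
      have eta_ok: "2*\<epsilon> \<le> \<eta>" "\<epsilon> \<le> \<delta>" "\<epsilon> \<le> \<eta>*\<delta>" using ed ed2 dpos unfolding \<eta>_def
        by (auto simp: mult.assoc) (smt (verit) mult_nonneg_nonneg)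
      define N where "N = card S"
      have m_eq: "m = card U + card V" unfolding m_def using bip by (simp add: card_Un_disjoint)
      have cardS: "N = m + n"
      proof -
        have "S = Inl ` (U \<union> V) \<union> Inr ` {1..n}" unfolding S_def tensor_verts_def by simp
        moreover have "Inl ` (U \<union> V) \<inter> Inr ` {1..n} = {}" by auto
        ultimately have "card S = card (Inl ` (U \<union> V) :: ('a+nat) set) + card (Inr ` {1..n} :: ('a+nat) set)"
          using bip by (simp add: card_Un_disjoint)
        then show ?thesis unfolding N_def m_def by (simp add: card_image)
      qed
      have cardC: "card C = n" unfolding C_def by (simp add: card_image)
      have mpos: "1 \<le> m" unfolding m_def using assms(4) bip by (simp add: Suc_le_eq card_gt_0_iff)
      have nm: "n \<le> m" "m \<le> 2*n" unfolding n_def using m_eq by auto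
      have npos: "1 \<le> n" using nm mpos by linarith
      have CS: "C \<subseteq> S" unfolding C_def S_def tensor_verts_def by auto
      have sumQ: "(\<Sum>X\<in>Q. real (card X)) = real N"
      proof -
        have "card (\<Union>Q) = sum card Q"
          by (rule card_Union_disjoint) (use Qdisj finX in \<open>auto simp: pairwise_def disjnt_def\<close>)
        then show ?thesis unfolding N_def QU by simp
      qed
      have sumC: "(\<Sum>Z\<in>Q. real (card (Z \<inter> C))) = real n"
      proof -
        have "card (\<Union>Z\<in>Q. Z \<inter> C) = (\<Sum>Z\<in>Q. card (Z \<inter> C))"
          by (rule card_UN_disjoint) (use finQ finX Qdisj in auto)
        moreover have "(\<Union>Z\<in>Q. Z \<inter> C) = C" using CS QU by blast
        ultimately show ?thesis using cardC by simp
      qed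
      have cXU: "card (XU X) = card (Inl ` XU X :: ('a+nat) set)" for X by (simp add: card_image)
      have cXV: "card (XV X) = card (Inl ` XV X :: ('a+nat) set)" for X by (simp add: card_image)
      have XUle: "card (XU X) \<le> card X" if "X \<in> Q" for X
      proof -
        have "card (Inl ` XU X :: ('a+nat) set) \<le> card X" using that finX by (intro card_mono) (auto simp: XU_def)
        then show ?thesis using cXU[of X] by simp
      qed
      have XVle: "card (XV X) \<le> card X" if "X \<in> Q" for X
      proof -
        have "card (Inl ` XV X :: ('a+nat) set) \<le> card X" using that finX by (intro card_mono) (auto simp: XV_def)
        then show ?thesis using cXV[of X] by simp
      qed
      have sumU: "(\<Sum>X\<in>Q. real (card (XU X))) = real (card U)"
      proof -
        have "card (\<Union>X\<in>Q. XU X) = (\<Sum>X\<in>Q. card (XU X))"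
          by (rule card_UN_disjoint) (use finQ bip Qdisj in \<open>auto simp: XU_def\<close>)
        moreover have "(\<Union>X\<in>Q. XU X) = U" unfolding XU_def using InlS inS by blast
        ultimately show ?thesis by simp
      qed
      have sumV: "(\<Sum>X\<in>Q. real (card (XV X))) = real (card V)"
      proof -
        have "card (\<Union>X\<in>Q. XV X) = (\<Sum>X\<in>Q. card (XV X))"
          by (rule card_UN_disjoint) (use finQ bip Qdisj in \<open>auto simp: XV_def\<close>)
        moreover have "(\<Union>X\<in>Q. XV X) = V" unfolding XV_def using InlS inS by blast
        ultimately show ?thesis by simp
      qed
      define small1 where "small1 = (\<lambda>X. real (card (XU X)) < \<delta> * real (card X))"
      define small2 where "small2 = (\<lambda>X. real (card (XV X)) < \<delta> * real (card X))"
      define good where "good = (\<lambda>Z. \<epsilon> * real (card Z) \<le> real (card (Z \<inter> C)))"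
      define bigbad where "bigbad = (\<lambda>X Y. \<not> small1 X \<and> \<not> small2 Y \<and> \<not> g_regular_pair E \<eta> (XU X) (XV Y))"
      define Bsum where "Bsum = (\<Sum>X\<in>Q. \<Sum>Y\<in>Q. if bigbad X Y then real (card X) * real (card Y) else 0)"
      define Gs where "Gs = (\<Sum>Z\<in>Q. if good Z then real (card Z) else 0)"
      have Bpos: "0 \<le> Bsum" unfolding Bsum_def by (intro sum_nonneg) auto
      have HB: "Bsum * Gs \<le> \<epsilon> * real N ^ 3"
      proof -
        define covH where "covH = {(x,y,z) \<in> S \<times> S \<times> S. \<exists>X\<in>Q. \<exists>Y\<in>Q. \<exists>Z\<in>Q.
           h_regular_triple F \<epsilon> X Y Z \<and> x \<in> X \<and> y \<in> Y \<and> z \<in> Z}"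
        have hcov: "(1-\<epsilon>) * real N ^ 3 \<le> real (card covH)"
          using assms(7) unfolding h_regular_partition_def covH_def N_def S_def F_def n_def by simp
        have covHsub: "covH \<subseteq> S \<times> S \<times> S" unfolding covH_def by auto
        have finS3: "finite (S \<times> S \<times> S)" using finS by simp
        have cS3: "card (S \<times> S \<times> S) = N ^ 3" by (simp add: card_cartesian_product N_def power3_eq_cube)
        define R where "R = (\<lambda>T. case T of (X,Y,Z) \<Rightarrow> bigbad X Y \<and> good Z)"
        define UH where "UH = (\<Union>T\<in>{T \<in> Q \<times> Q \<times> Q. R T}. (case T of (X,Y,Z) \<Rightarrow> X \<times> Y \<times> Z))"
        have UHsub: "UH \<subseteq> S \<times> S \<times> S - covH"
        proof
          fix p assume "p \<in> UH"
          then obtain X Y Z x y z where T: "X\<in>Q" "Y\<in>Q" "Z\<in>Q" "bigbad X Y" "good Z" "p=(x,y,z)"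
            "x\<in>X" "y\<in>Y" "z\<in>Z" unfolding UH_def R_def by auto
          have Zne: "0 < card Z" using Qne[OF T(3)] finX[OF T(3)] by (simp add: card_gt_0_iff)
          have "0 < \<epsilon> * real (card Z)" using Zne assms(1) by simp
          then have ZCne: "Z \<inter> C \<noteq> {}" using T(5) unfolding good_def by auto
          have nreg: "\<not> h_regular_triple F \<epsilon> X Y Z"
            unfolding F_def
          proof (rule key[OF assms(1) eta_ok])
            show "Inl ` XU X \<subseteq> X" "Inl ` XV Y \<subseteq> Y" unfolding XU_def XV_def by auto
            show "finite (XU X)" "finite (XV Y)" unfolding XU_def XV_def using bip by auto
            show "Z \<inter> C \<subseteq> Z" "Z \<inter> C \<subseteq> Inr ` {1..n}" unfolding C_def by auto
            show "finite (Z \<inter> C)" using finX[OF T(3)] by simp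
            show "Z \<inter> C \<noteq> {}" by (rule ZCne)
            show "\<epsilon> * real (card Z) \<le> real (card (Z \<inter> C))" using T(5) unfolding good_def .
            show "\<delta> * real (card X) \<le> real (card (XU X))" "\<delta> * real (card Y) \<le> real (card (XV Y))"
              "\<not> g_regular_pair E \<eta> (XU X) (XV Y)" using T(4) unfolding bigbad_def small1_def small2_def by auto
          qed
          have pS: "p \<in> S \<times> S \<times> S" using T XS by auto
          have "p \<notin> covH"
          proof
            assume "p \<in> covH"
            then obtain X0 Y0 Z0 where "X0\<in>Q" "Y0\<in>Q" "Z0\<in>Q" "h_regular_triple F \<epsilon> X0 Y0 Z0"
              "x \<in> X0" "y \<in> Y0" "z \<in> Z0" unfolding covH_def T(6) by auto
            then have "X0 = X" "Y0 = Y" "Z0 = Z" using uniq T by metis+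
            then show False using nreg \<open>h_regular_triple F \<epsilon> X0 Y0 Z0\<close> by simp
          qed
          then show "p \<in> S \<times> S \<times> S - covH" using pS by simp
        qed
        have "card UH \<le> card (S \<times> S \<times> S - covH)" using UHsub finS3 by (intro card_mono) auto
        also have "\<dots> = card (S \<times> S \<times> S) - card covH" using covHsub finS3
          by (simp add: card_Diff_subset finite_subset)
        finally have "real (card UH) \<le> real (card (S \<times> S \<times> S) - card covH)" by simp
        also have "\<dots> = real N ^ 3 - real (card covH)"
          using card_mono[OF finS3 covHsub] cS3 by (simp add: of_nat_diff)
        finally have UHb: "real (card UH) \<le> \<epsilon> * real N ^ 3" using hcov by (simp add: algebra_simps)
        have "real (card UH) = (\<Sum>X\<in>Q. \<Sum>Y\<in>Q. \<Sum>Z\<in>Q. if R (X,Y,Z) then real (card X) * real (card Y) * real (card Z) else 0)"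
          unfolding UH_def by (rule card_UN_triples) (use finQ finX Qdisj in auto)
        also have "\<dots> = (\<Sum>X\<in>Q. \<Sum>Y\<in>Q. \<Sum>Z\<in>Q. (if bigbad X Y then real (card X) * real (card Y) else 0) * (if good Z then real (card Z) else 0))"
          unfolding R_def by (intro sum.cong refl) auto
        also have "\<dots> = Bsum * Gs"
          unfolding Bsum_def sum_distrib_right unfolding Gs_def sum_distrib_left ..
        finally show ?thesis using UHb by simp
      qed
      have GsB: "real n - \<epsilon> * real N \<le> Gs"
      proof -
        have "\<And>Z. Z \<in> Q \<Longrightarrow> real (card (Z \<inter> C)) - \<epsilon> * real (card Z) \<le> (if good Z then real (card Z) else 0)"
        proof -
          fix Z assume Z: "Z \<in> Q"
          show "real (card (Z \<inter> C)) - \<epsilon> * real (card Z) \<le> (if good Z then real (card Z) else 0)"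
          proof (cases "good Z")
            case True
            have "card (Z \<inter> C) \<le> card Z" using finX[OF Z] by (intro card_mono) auto
            moreover have "0 \<le> \<epsilon> * real (card Z)" using assms(1) by simp
            ultimately show ?thesis using True by simp
          next
            case False
            then show ?thesis unfolding good_def by simp
          qed
        qed
        then have "(\<Sum>Z\<in>Q. real (card (Z \<inter> C)) - \<epsilon> * real (card Z)) \<le> Gs"
          unfolding Gs_def by (rule sum_mono)
        moreover have "(\<Sum>Z\<in>Q. real (card (Z \<inter> C)) - \<epsilon> * real (card Z)) = real n - \<epsilon> * real N"
          by (simp add: sum_subtractf sum_distrib_left[symmetric] sumC sumQ)
        ultimately show ?thesis by simp
      qed
      have B1: "Bsum * (real n - \<epsilon> * real N) \<le> \<epsilon> * real N ^ 3"
        using HB GsB Bpos by (meson mult_left_mono order_trans)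
      have sum1: "(\<Sum>X\<in>Q. \<Sum>Y\<in>Q. if \<not> g_regular_pair E \<eta> (XU X) (XV Y) then real (card (XU X)) * real (card (XV Y)) else 0)
          \<le> \<delta> * real N * real m + Bsum"
      proof -
        define s1 where "s1 = (\<lambda>X. if small1 X then real (card (XU X)) else 0)"
        define s2 where "s2 = (\<lambda>X. if small2 X then real (card (XV X)) else 0)"
        have pw: "(if \<not> g_regular_pair E \<eta> (XU X) (XV Y) then real (card (XU X)) * real (card (XV Y)) else 0)
            \<le> s1 X * real (card (XV Y)) + real (card (XU X)) * s2 Y
               + (if bigbad X Y then real (card X) * real (card Y) else 0)" if XY: "X \<in> Q" "Y \<in> Q" for X Y
        proof -
          have a: "real (card (XU X)) \<le> real (card X)" using XUle[OF XY(1)] by simp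
          have b: "real (card (XV Y)) \<le> real (card Y)" using XVle[OF XY(2)] by simp
          have n1: "0 \<le> s1 X * real (card (XV Y))" unfolding s1_def by simp
          have n2: "0 \<le> real (card (XU X)) * s2 Y" unfolding s2_def by simp
          have n3: "0 \<le> (if bigbad X Y then real (card X) * real (card Y) else 0)" by simp
          show ?thesis
          proof (cases "g_regular_pair E \<eta> (XU X) (XV Y)")
            case True
            then show ?thesis using n1 n2 n3 by simp
          next
            case False
            show ?thesis
            proof (cases "small1 X")
              case True
              then show ?thesis using False n2 n3 unfolding s1_def by simp
            next
              case nX: False
              show ?thesis
              proof (cases "small2 Y")
                case True
                then show ?thesis using False n1 n3 unfolding s2_def by simp
              next
                case nY: False
                then have "bigbad X Y" using nX False unfolding bigbad_def by simp
                moreover have "real (card (XU X)) * real (card (XV Y)) \<le> real (card X) * real (card Y)"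
                  using a b by (intro mult_mono) auto
                ultimately show ?thesis using n1 n2 False by simp
              qed
            qed
          qed
        qed
        have s1b: "(\<Sum>X\<in>Q. s1 X) \<le> \<delta> * real N"
        proof -
          have "(\<Sum>X\<in>Q. s1 X) \<le> (\<Sum>X\<in>Q. \<delta> * real (card X))"
            by (rule sum_mono) (use dpos in \<open>auto simp: s1_def small1_def\<close>)
          also have "\<dots> = \<delta> * real N" by (simp add: sum_distrib_left[symmetric] sumQ)
          finally show ?thesis .
        qed
        have s2b: "(\<Sum>X\<in>Q. s2 X) \<le> \<delta> * real N"
        proof -
          have "(\<Sum>X\<in>Q. s2 X) \<le> (\<Sum>X\<in>Q. \<delta> * real (card X))"
            by (rule sum_mono) (use dpos in \<open>auto simp: s2_def small2_def\<close>)
          also have "\<dots> = \<delta> * real N" by (simp add: sum_distrib_left[symmetric] sumQ)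
          finally show ?thesis .
        qed
        have "(\<Sum>X\<in>Q. \<Sum>Y\<in>Q. if \<not> g_regular_pair E \<eta> (XU X) (XV Y) then real (card (XU X)) * real (card (XV Y)) else 0)
           \<le> (\<Sum>X\<in>Q. \<Sum>Y\<in>Q. s1 X * real (card (XV Y)) + real (card (XU X)) * s2 Y
               + (if bigbad X Y then real (card X) * real (card Y) else 0))"
          by (intro sum_mono pw)
        also have "\<dots> = (\<Sum>X\<in>Q. s1 X) * real (card V) + real (card U) * (\<Sum>Y\<in>Q. s2 Y) + Bsum"
          unfolding Bsum_def sum.distrib sum_distrib_left[symmetric] sumV
          by (simp add: sum_distrib_right[symmetric] sumU)
        also have "\<dots> \<le> \<delta> * real N * real (card V) + real (card U) * (\<delta> * real N) + Bsum"
          using s1b s2b by (intro add_mono mult_right_mono mult_left_mono) auto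
        also have "\<dots> = \<delta> * real N * real m + Bsum" using m_eq by (simp add: algebra_simps)
        finally show ?thesis .
      qed
      have cover: "real m ^ 2 \<le> real (card covG) + 2 * (\<delta> * real N * real m + Bsum)"
      proof -
        define R1 where "R1 = (\<lambda>T. case T of (X,Y) \<Rightarrow> \<not> g_regular_pair E \<eta> (XU X) (XV Y))"
        define R2 where "R2 = (\<lambda>T. case T of (X,Y) \<Rightarrow> \<not> g_regular_pair E \<eta> (XV X) (XU Y))"
        define Bad1 where "Bad1 = (\<Union>T\<in>{T \<in> Q \<times> Q. R1 T}. (case T of (X,Y) \<Rightarrow> XU X \<times> XV Y))"
        define Bad2 where "Bad2 = (\<Union>T\<in>{T \<in> Q \<times> Q. R2 T}. (case T of (X,Y) \<Rightarrow> XV X \<times> XU Y))"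
        have eta0: "0 \<le> \<eta>" unfolding \<eta>_def using dpos by simp
        have sub: "(U \<union> V) \<times> (U \<union> V) \<subseteq> covG \<union> Bad1 \<union> Bad2"
        proof
          fix p assume p: "p \<in> (U \<union> V) \<times> (U \<union> V)"
          then obtain x y where xy: "p = (x,y)" "x \<in> U \<union> V" "y \<in> U \<union> V" by auto
          obtain X where X: "X \<in> Q" "Inl x \<in> X" using inS InlS xy(2) by blast
          obtain Y where Y: "Y \<in> Q" "Inl y \<in> Y" using inS InlS xy(3) by blast
          have xU: "x \<in> U \<Longrightarrow> x \<in> XU X" and xV: "x \<in> V \<Longrightarrow> x \<in> XV X"
            and yU: "y \<in> U \<Longrightarrow> y \<in> XU Y" and yV: "y \<in> V \<Longrightarrow> y \<in> XV Y"
            using X Y unfolding XU_def XV_def by auto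
          have sU: "XU Z \<subseteq> U" and sV: "XV Z \<subseteq> V" for Z unfolding XU_def XV_def by auto
          have incov: "p \<in> covG" if "A \<in> P" "B \<in> P" "g_regular_pair E \<eta> A B" "x \<in> A" "y \<in> B" for A B
            unfolding covG_def using that xy by blast
          show "p \<in> covG \<union> Bad1 \<union> Bad2"
          proof (cases "x \<in> U")
            case xu: True
            show ?thesis
            proof (cases "y \<in> U")
              case True
              have "g_regular_pair E \<eta> (XU X) (XU Y)"
                by (rule greg_same_side[OF assms(3) sU sU _ eta0]) simp
              then show ?thesis using incov XUP X Y xU yU xu True by blast
            next
              case False
              then have yv: "y \<in> V" using xy by auto
              show ?thesis
              proof (cases "g_regular_pair E \<eta> (XU X) (XV Y)")
                case True
                then show ?thesis using incov XUP XVP X Y xU yV xu yv by blast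
              next
                case False
                then have "p \<in> Bad1" unfolding Bad1_def R1_def using X Y xU yV xu yv xy(1) by blast
                then show ?thesis by blast
              qed
            qed
          next
            case xu: False
            then have xv: "x \<in> V" using xy by auto
            show ?thesis
            proof (cases "y \<in> U")
              case yu: True
              show ?thesis
              proof (cases "g_regular_pair E \<eta> (XV X) (XU Y)")
                case True
                then show ?thesis using incov XUP XVP X Y xV yU xv yu by blast
              next
                case False
                then have "p \<in> Bad2" unfolding Bad2_def R2_def using X Y xV yU xv yu xy(1) by blast
                then show ?thesis by blast
              qed
            next
              case False
              then have yv: "y \<in> V" using xy by auto
              have "g_regular_pair E \<eta> (XV X) (XV Y)"
                by (rule greg_same_side[OF assms(3) sV sV _ eta0]) simp
              then show ?thesis using incov XVP X Y xV yV xv yv by blast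
            qed
          qed
        qed
        have finUV: "finite (U \<union> V)" using bip by simp
        have covsub: "covG \<subseteq> (U \<union> V) \<times> (U \<union> V)" unfolding covG_def by auto
        have fB1: "finite Bad1" unfolding Bad1_def using finQ bip unfolding XU_def XV_def by auto
        have fB2: "finite Bad2" unfolding Bad2_def using finQ bip unfolding XU_def XV_def by auto
        have fcov: "finite covG" using covsub finUV finite_subset by blast
        have "m * m = card ((U \<union> V) \<times> (U \<union> V))" unfolding m_def by (simp add: card_cartesian_product)
        also have "\<dots> \<le> card (covG \<union> Bad1 \<union> Bad2)" using sub fB1 fB2 fcov by (intro card_mono) auto
        also have "\<dots> \<le> card covG + card Bad1 + card Bad2" by (meson add_mono card_Un_le le_refl order_trans)
        finally have c1: "real m ^ 2 \<le> real (card covG) + real (card Bad1) + real (card Bad2)"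
          by (simp add: power2_eq_square flip: of_nat_add of_nat_mult)
        define sm1 where "sm1 = (\<Sum>X\<in>Q. \<Sum>Y\<in>Q. if \<not> g_regular_pair E \<eta> (XU X) (XV Y) then real (card (XU X)) * real (card (XV Y)) else 0)"
        have cb1: "real (card Bad1) \<le> sm1"
        proof -
          have "real (card Bad1) \<le> (\<Sum>X\<in>Q. \<Sum>Y\<in>Q. if R1 (X,Y) then real (card (XU X)) * real (card (XV Y)) else 0)"
            unfolding Bad1_def by (rule card_UN_pairs[OF finQ])
          then show ?thesis unfolding sm1_def R1_def by simp
        qed
        have cb2: "real (card Bad2) \<le> sm1"
        proof -
          have "real (card Bad2) \<le> (\<Sum>X\<in>Q. \<Sum>Y\<in>Q. if R2 (X,Y) then real (card (XV X)) * real (card (XU Y)) else 0)"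
            unfolding Bad2_def by (rule card_UN_pairs[OF finQ])
          also have "\<dots> = (\<Sum>Y\<in>Q. \<Sum>X\<in>Q. if R2 (X,Y) then real (card (XV X)) * real (card (XU Y)) else 0)"
            by (rule sum.swap)
          also have "\<dots> = sm1" unfolding sm1_def R2_def
            by (intro sum.cong refl) (auto simp: mult.commute dest: greg_swap)
          finally show ?thesis .
        qed
        show ?thesis using c1 cb1 cb2 sum1[folded sm1_def] by (smt (verit))
      qed
      have fin_arith: "2 * (\<delta> * real N * real m + Bsum) \<le> \<eta> * real m ^ 2"
      proof -
        have N2m: "real N \<le> 2 * real m" and N3n: "real N \<le> 3 * real n" using cardS nm by auto
        have e16: "\<epsilon> \<le> 1/6" using ed dsmall by simp
        have "\<epsilon> * real N \<le> \<epsilon> * (3 * real n)" using N3n assms(1) by (intro mult_left_mono) auto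
        also have "\<dots> \<le> (1/6) * (3 * real n)" using e16 by (intro mult_right_mono) auto
        finally have nh: "real n / 2 \<le> real n - \<epsilon> * real N" by simp
        have "real N ^ 3 = real N * real N * real N" by (simp add: power3_eq_cube)
        also have "\<dots> \<le> (2 * real m) * (2 * real m) * (3 * real n)"
          using N2m N3n by (intro mult_mono) auto
        finally have N3: "real N ^ 3 \<le> 12 * real m ^ 2 * real n" by (simp add: power2_eq_square algebra_simps)
        have "Bsum * (real n / 2) \<le> Bsum * (real n - \<epsilon> * real N)" using nh Bpos by (intro mult_left_mono)
        also have "\<dots> \<le> \<epsilon> * real N ^ 3" by (rule B1)
        also have "\<dots> \<le> \<epsilon> * (12 * real m ^ 2 * real n)" using N3 assms(1) by (intro mult_left_mono) auto
        finally have "Bsum * real n \<le> (24 * \<epsilon> * real m ^ 2) * real n" by (simp add: algebra_simps)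
        then have Bb: "Bsum \<le> 24 * \<epsilon> * real m ^ 2" using npos by (simp add: mult_le_cancel_right)
        have "24 * \<epsilon> * real m ^ 2 \<le> \<delta> * real m ^ 2" using ed dpos by (intro mult_right_mono) auto
        with Bb have Bb2: "Bsum \<le> \<delta> * real m ^ 2" by linarith
        have "\<delta> * real N * real m \<le> \<delta> * (2 * real m) * real m" using N2m dpos by (intro mult_right_mono mult_left_mono) auto
        then have "\<delta> * real N * real m \<le> 2 * (\<delta> * real m ^ 2)" by (simp add: power2_eq_square algebra_simps)
        with Bb2 have "2 * (\<delta> * real N * real m + Bsum) \<le> 6 * (\<delta> * real m ^ 2)" by (smt (verit))
        also have "\<dots> \<le> 36 * (\<delta> * real m ^ 2)" using dpos by simp
        also have "\<dots> = \<eta> * real m ^ 2" unfolding \<eta>_def by simp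
        finally show ?thesis .
      qed
      show ?thesis using cover fin_arith by (simp add: algebra_simps)
    qed
    then show ?thesis unfolding g_regular_partition_def covG_def m_def .
  qed
  show ?thesis using partP cardP reg unfolding \<eta>_def \<delta>_def by blast
qed


end
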